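(* Let $\mathfrak R$ be either a cubical iterated graph system $\mathfrak R\subseteq\mathfrak R(d_*,L_*,s_* )$ with $d_*\ge2$, or the pentagonal Sierpiński carpet iterated graph system, with replacement graphs $G_m$. Then for every $M>0$ there exist $m\in\mathbb N$ and a type $t$ such that the family $\Theta_t^{(m)}$ of all paths in $G_m$ from $I_{t,-}^{(m)}$ to $I_{t,+}^{(m)}$ contains at least $M$ pairwise (vertex-)disjoint paths.
   Context: Graphs: $(V,E)$, $V$ finite non-empty, $E\subseteq V\times V$, $(x,y)\in E\Rightarrow(y,x)\notin E$; $\{x,y\}\in E$ means either orientation; a path is a sequence $[x_1,\dots,x_k]$ with $\{x_i,x_{i+1}\}\in E$; a path from $A$ to $B$ has $x_1\in A$, $x_k\in B$. An iterated graph system (IGS) $\mathfrak R$: connected graph $G_1=(S,E)$, finite type set $\mathcal T$, surjective typing $\mathfrak t:E\to\mathcal T$, non-empty gluing rules $I_t\subseteq S\times S$; $I_{t,+}$, $I_{t,-}$ are the sets of first, resp. second, coordinates of $I_t$ and $I^{(m)}_{t,\star}=(I_{t,\star})^m\subseteq W_m$. With $W_m=S^m$, $[w]_k=w_1\cdots w_k$, replacement graphs $G_m=(W_m,E_m)$: $(w,v)\in E_{m+1}$ iff (1) $[w]_m=[v]_m$ and $(w_{m+1},v_{m+1})\in E$ (type $\mathfrak t(w_{m+1},v_{m+1})$), or (2) $([w]_m,[v]_m)\in E_m$ and $(w_{m+1},v_{m+1})\in I_{\mathfrak t([w]_m,[v]_m)}$ (type $\mathfrak t([w]_m,[v]_m)$).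 Mapping of IGS $\varphi:\mathfrak R\to\mathfrak R'$: graph mapping $G_1\to G_1'$ (edges to edges or collapsed) with (i) if $\varphi(w_1)=\varphi(v_1)$ for an edge of type $t$ then $\varphi(w_2)=\varphi(v_2)$ for all $(w_2,v_2)\in I_t$; (ii) if $(w_1,v_1)\in E$ of type $t$ and $(\varphi(w_1),\varphi(v_1))\in E'$ of type $t'$ then $(\varphi(w_2),\varphi(v_2))\in I'_{t'}$ for $(w_2,v_2)\in I_t$; (iii) if $(w_1,v_1)\in E$ of type $t$ and $(\varphi(v_1),\varphi(w_1))\in E'$ of type $t'$ then $(\varphi(v_2),\varphi(w_2))\in I'_{t'}$ for $(w_2,v_2)\in I_t$. Isomorphism of IGS: graph isomorphism with it and its inverse mappings of IGS; sub-system: $S\subseteq S'$, same types, inclusion a mapping of IGS. Cubical IGS: for integers $d_*\ge1,s_*\ge1,L_*\ge3$, $\mathfrak R(d_*,L_*,s_* )$ has symbols $\{1,\dots,L_*\}^{d_*}\times\{\underline1,\dots,\underline{s_*}\}$ with coordinates $c_i$, sheet $s$; types $t_1,\dots,t_{d_*}$; $(w,v)$ edge of type $t_j$ iff $c_i(v)=c_i(w)$ ($i\neq j$), $c_j(v)=c_j(w)+1$; $(w,v)\in I_{t_j}$ iff $c_i(w)=c_i(v)$ ($i\neq j$), $(c_j(w),c_j(v))=(L_*,1)$, $s(w)=s(v)$. Sheet- and other-coordinate-preserving maps: $\eta_j:c_j\mapsto L_*+1-c_j$; $\alpha^+_{j,k}$ ($j\ne k$) swaps $c_j,c_k$; $\alpha^-_{j,k}$: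 $c_k\mapsto L_*+1-c_j$, $c_j\mapsto L_*+1-c_k$; $\mathcal G$ the set of these. A cubical IGS is a sub-system $\mathfrak R\subseteq\mathfrak R(d_*,L_*,s_* )$ with (C1) for each $j$, every symbol with $c_i\in\{1,L_*\}$ ($i\ne j$) and sheet $\underline1$ (condition $(\ast_j)$) is in $S(\mathfrak R)$; (C2) if $w,v$ satisfy $(\ast_j)$, agree off coordinate $j$, and $c_j(v)=c_j(w)+1$, then $(w,v)\in E(\mathfrak R)$; (C3) if $w,v$ satisfy $(\ast_j)$, agree off coordinate $j$, and $(c_j(w),c_j(v))=(L_*,1)$, then $(w,v)\in I_{t_j}(\mathfrak R)$; (C4) each $\alpha\in\mathcal G$ restricts to an isomorphism of IGS $\mathfrak R\to\mathfrak R$. Pentagonal Sierpiński carpet: $S=\{0,\dots,4\}$, $E=\{(0,1),(1,2),(2,3),(3,4),(4,0)\}$ of types $a,b,c,d,e$, $I_a=\{(1,0),(2,4)\}$, $I_b=\{(2,1),(3,0)\}$, $I_c=\{(3,2),(4,1)\}$, $I_d=\{(4,3),(0,2)\}$, $I_e=\{(0,4),(1,3)\}$. *)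

theory Defs
  imports Main
begin

record ('a, 't) igs =
  Sym  :: "'a set"
  Edg  :: "('a \<times> 'a) set"
  Typs :: "'t set"
  ttyp :: "'a \<times> 'a \<Rightarrow> 't"
  Glue :: "'t \<Rightarrow> ('a \<times> 'a) set"

definition is_IGS :: "('a, 't) igs \<Rightarrow> bool" where
  "is_IGS R \<longleftrightarrow>
     finite (Sym R) \<and> Sym R \<noteq> {} \<and> Edg R \<subseteq> Sym R \<times> Sym R \<and>
     (\<forall>x y. (x, y) \<in> Edg R \<longrightarrow> (y, x) \<notin> Edg R) \<and>
     (\<forall>x\<in>Sym R. \<forall>y\<in>Sym R. (x, y) \<in> (Edg R \<union> (Edg R)\<inverse>)\<^sup>*) \<and>
     finite (Typs R) \<and> ttyp R ` Edg R = Typs R \<and>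
     (\<forall>t\<in>Typs R. Glue R t \<noteq> {} \<and> Glue R t \<subseteq> Sym R \<times> Sym R)"

definition igs_map :: "('a, 't) igs \<Rightarrow> ('b, 's) igs \<Rightarrow> ('a \<Rightarrow> 'b) \<Rightarrow> bool" where
  "igs_map R R' \<phi> \<longleftrightarrow>
     \<phi> ` Sym R \<subseteq> Sym R' \<and>
     (\<forall>(x, y)\<in>Edg R. \<phi> x = \<phi> y \<or> (\<phi> x, \<phi> y) \<in> Edg R' \<or> (\<phi> y, \<phi> x) \<in> Edg R') \<and>
     (\<forall>(x, y)\<in>Edg R. \<phi> x = \<phi> y \<longrightarrow>
        (\<forall>(a, b)\<in>Glue R (ttyp R (x, y)). \<phi> a = \<phi> b)) \<and>
     (\<forall>(x, y)\<in>Edg R. (\<phi> x, \<phi> y) \<in> Edg R' \<longrightarrow>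
        (\<forall>(a, b)\<in>Glue R (ttyp R (x, y)). (\<phi> a, \<phi> b) \<in> Glue R' (ttyp R' (\<phi> x, \<phi> y)))) \<and>
     (\<forall>(x, y)\<in>Edg R. (\<phi> y, \<phi> x) \<in> Edg R' \<longrightarrow>
        (\<forall>(a, b)\<in>Glue R (ttyp R (x, y)). (\<phi> b, \<phi> a) \<in> Glue R' (ttyp R' (\<phi> y, \<phi> x))))"

definition igs_iso :: "('a, 't) igs \<Rightarrow> ('b, 's) igs \<Rightarrow> ('a \<Rightarrow> 'b) \<Rightarrow> bool" where
  "igs_iso R R' \<phi> \<longleftrightarrow>
     bij_betw \<phi> (Sym R) (Sym R') \<and> igs_map R R' \<phi> \<and> igs_map R' R (inv_into (Sym R) \<phi>)"

definition sub_system :: "('a, 't) igs \<Rightarrow> ('a, 't) igs \<Rightarrow> bool" where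
  "sub_system R R' \<longleftrightarrow>
     Sym R \<subseteq> Sym R' \<and> Typs R = Typs R' \<and>
     (\<forall>e\<in>Edg R. ttyp R e = ttyp R' e) \<and> igs_map R R' id"

text \<open>Words of length m are lists; the prefix [w]_k is take k w.\<close>
definition words :: "('a, 't) igs \<Rightarrow> nat \<Rightarrow> 'a list set" where
  "words R m = {w. length w = m \<and> set w \<subseteq> Sym R}"

fun rep_typ :: "('a, 't) igs \<Rightarrow> nat \<Rightarrow> 'a list \<Rightarrow> 'a list \<Rightarrow> 't" where
  "rep_typ R 0 w v = ttyp R (hd w, hd v)"
| "rep_typ R (Suc 0) w v = ttyp R (hd w, hd v)"
| "rep_typ R (Suc (Suc m)) w v =
     (if take (Suc m) w = take (Suc m) v then ttyp R (w ! Suc m, v ! Suc m)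
      else rep_typ R (Suc m) (take (Suc m) w) (take (Suc m) v))"

fun rep_edges :: "('a, 't) igs \<Rightarrow> nat \<Rightarrow> ('a list \<times> 'a list) set" where
  "rep_edges R 0 = {}"
| "rep_edges R (Suc 0) = {([x], [y]) | x y. (x, y) \<in> Edg R}"
| "rep_edges R (Suc (Suc m)) =
     {(u @ [x], u @ [y]) | u x y. u \<in> words R (Suc m) \<and> (x, y) \<in> Edg R} \<union>
     {(u @ [x], v @ [y]) | u v x y. (u, v) \<in> rep_edges R (Suc m) \<and>
                                   (x, y) \<in> Glue R (rep_typ R (Suc m) u v)}"

definition is_path :: "('a, 't) igs \<Rightarrow> nat \<Rightarrow> 'a list list \<Rightarrow> bool" where
  "is_path R m p \<longleftrightarrow> p \<noteq> [] \<and> set p \<subseteq> words R m \<and>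
     (\<forall>i. Suc i < length p \<longrightarrow>
        (p ! i, p ! Suc i) \<in> rep_edges R m \<or> (p ! Suc i, p ! i) \<in> rep_edges R m)"

definition glue_plus :: "('a, 't) igs \<Rightarrow> nat \<Rightarrow> 't \<Rightarrow> 'a list set" where
  "glue_plus R m t = {w. length w = m \<and> set w \<subseteq> fst ` Glue R t}"

definition glue_minus :: "('a, 't) igs \<Rightarrow> nat \<Rightarrow> 't \<Rightarrow> 'a list set" where
  "glue_minus R m t = {w. length w = m \<and> set w \<subseteq> snd ` Glue R t}"

definition Theta :: "('a, 't) igs \<Rightarrow> nat \<Rightarrow> 't \<Rightarrow> 'a list list set" where
  "Theta R m t = {p. is_path R m p \<and> hd p \<in> glue_minus R m t \<and> last p \<in> glue_plus R m t}"

definition has_many_disjoint_paths :: "('a, 't) igs \<Rightarrow> bool" where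
  "has_many_disjoint_paths R \<longleftrightarrow>
     (\<forall>M::nat. M > 0 \<longrightarrow> (\<exists>m t. m \<ge> 1 \<and> t \<in> Typs R \<and>
        (\<exists>F. F \<subseteq> Theta R m t \<and> finite F \<and> card F \<ge> M \<and>
             (\<forall>p\<in>F. \<forall>q\<in>F. p \<noteq> q \<longrightarrow> set p \<inter> set q = {}))))"

text \<open>Symbols: (c, s) with c a coordinate list of length d (coordinate j is c ! j, j < d,
  i.e. coordinates indexed 0..d-1) with entries in {1..L}, and sheet s \<in> {1..sh}.
  Type t_j is represented by the natural number j < d.\<close>
type_synonym csym = "nat list \<times> nat"

definition cube_syms :: "nat \<Rightarrow> nat \<Rightarrow> nat \<Rightarrow> csym set" where
  "cube_syms d L sh = {(c, s). length c = d \<and> set c \<subseteq> {1..L} \<and> s \<in> {1..sh}}"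

definition agree_off :: "nat \<Rightarrow> nat \<Rightarrow> csym \<Rightarrow> csym \<Rightarrow> bool" where
  "agree_off d j w v \<longleftrightarrow> (\<forall>i<d. i \<noteq> j \<longrightarrow> fst w ! i = fst v ! i)"

definition cube_full :: "nat \<Rightarrow> nat \<Rightarrow> nat \<Rightarrow> (csym, nat) igs" where
  "cube_full d L sh =
     \<lparr> Sym = cube_syms d L sh,
       Edg = {(w, v). w \<in> cube_syms d L sh \<and> v \<in> cube_syms d L sh \<and>
                (\<exists>j<d. agree_off d j w v \<and> fst v ! j = fst w ! j + 1)},
       Typs = {..<d},
       ttyp = (\<lambda>(w, v). LEAST j. fst w ! j \<noteq> fst v ! j),
       Glue = (\<lambda>j. {(w, v). w \<in> cube_syms d L sh \<and> v \<in> cube_syms d L sh \<and>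
                agree_off d j w v \<and> fst w ! j = L \<and> fst v ! j = 1 \<and> snd w = snd v}) \<rparr>"

definition star_cond :: "nat \<Rightarrow> nat \<Rightarrow> nat \<Rightarrow> csym \<Rightarrow> bool" where
  "star_cond d L j w \<longleftrightarrow> (\<forall>i<d. i \<noteq> j \<longrightarrow> fst w ! i \<in> {1, L}) \<and> snd w = 1"

definition eta :: "nat \<Rightarrow> nat \<Rightarrow> csym \<Rightarrow> csym" where
  "eta L j = (\<lambda>(c, s). (c[j := L + 1 - c ! j], s))"

definition alpha_plus :: "nat \<Rightarrow> nat \<Rightarrow> csym \<Rightarrow> csym" where
  "alpha_plus j k = (\<lambda>(c, s). (c[j := c ! k, k := c ! j], s))"

definition alpha_minus :: "nat \<Rightarrow> nat \<Rightarrow> nat \<Rightarrow> csym \<Rightarrow> csym" where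
  "alpha_minus L j k = (\<lambda>(c, s). (c[k := L + 1 - c ! j, j := L + 1 - c ! k], s))"

definition cube_group :: "nat \<Rightarrow> nat \<Rightarrow> (csym \<Rightarrow> csym) set" where
  "cube_group d L =
     {eta L j | j. j < d} \<union>
     {alpha_plus j k | j k. j < d \<and> k < d \<and> j \<noteq> k} \<union>
     {alpha_minus L j k | j k. j < d \<and> k < d \<and> j \<noteq> k}"

definition cubical_IGS :: "nat \<Rightarrow> nat \<Rightarrow> nat \<Rightarrow> (csym, nat) igs \<Rightarrow> bool" where
  "cubical_IGS d L sh R \<longleftrightarrow>
     d \<ge> 1 \<and> sh \<ge> 1 \<and> L \<ge> 3 \<and> is_IGS R \<and> sub_system R (cube_full d L sh) \<and>
     \<comment> \<open>(C1)\<close>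
     (\<forall>j<d. \<forall>w\<in>cube_syms d L sh. star_cond d L j w \<longrightarrow> w \<in> Sym R) \<and>
     \<comment> \<open>(C2)\<close>
     (\<forall>j<d. \<forall>w\<in>cube_syms d L sh. \<forall>v\<in>cube_syms d L sh.
        star_cond d L j w \<and> star_cond d L j v \<and> agree_off d j w v \<and> snd w = snd v \<and>
        fst v ! j = fst w ! j + 1 \<longrightarrow> (w, v) \<in> Edg R) \<and>
     \<comment> \<open>(C3)\<close>
     (\<forall>j<d. \<forall>w\<in>cube_syms d L sh. \<forall>v\<in>cube_syms d L sh.
        star_cond d L j w \<and> star_cond d L j v \<and> agree_off d j w v \<and> snd w = snd v \<and>
        fst w ! j = L \<and> fst v ! j = 1 \<longrightarrow> (w, v) \<in> Glue R j) \<and>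
     \<comment> \<open>(C4)\<close>
     (\<forall>\<alpha>\<in>cube_group d L. igs_iso R R \<alpha>)"

datatype ptype = Ta | Tb | Tc | Td | Te

definition pentagon :: "(nat, ptype) igs" where
  "pentagon =
     \<lparr> Sym = {0, 1, 2, 3, 4},
       Edg = {(0, 1), (1, 2), (2, 3), (3, 4), (4, 0)},
       Typs = UNIV,
       ttyp = (\<lambda>e. if e = (0, 1) then Ta else if e = (1, 2) then Tb else if e = (2, 3) then Tc
                  else if e = (3, 4) then Td else Te),
       Glue = (\<lambda>t. case t of
                 Ta \<Rightarrow> {(1, 0), (2, 4)}
               | Tb \<Rightarrow> {(2, 1), (3, 0)}
               | Tc \<Rightarrow> {(3, 2), (4, 1)}
               | Td \<Rightarrow> {(4, 3), (0, 2)}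
               | Te \<Rightarrow> {(0, 4), (1, 3)}) \<rparr>"

end

theory Submission
  imports Defs
begin


lemma rep_edges_len: "(u,v) \<in> rep_edges R m \<Longrightarrow> length u = m \<and> length v = m"
  by (induction R m arbitrary: u v rule: rep_edges.induct) (auto simp: words_def)

lemma rep_edges_irr: "\<forall>x. (x,x) \<notin> Edg R \<Longrightarrow> (u,v) \<in> rep_edges R m \<Longrightarrow> u \<noteq> v"
  by (induction R m arbitrary: u v rule: rep_edges.induct) auto

lemma E1: "u \<in> words R m \<Longrightarrow> (x,y) \<in> Edg R \<Longrightarrow>
  (u@[x], u@[y]) \<in> rep_edges R (Suc m) \<and> rep_typ R (Suc m) (u@[x]) (u@[y]) = ttyp R (x,y)"
proof (cases m)
  case 0
  assume "u \<in> words R m" "(x,y) \<in> Edg R"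
  then show ?thesis using 0 by (auto simp: words_def)
next
  case (Suc k)
  assume a: "u \<in> words R m" "(x,y) \<in> Edg R"
  then have "length u = Suc k" using Suc by (auto simp: words_def)
  then show ?thesis using a Suc by (auto simp: nth_append)
qed

lemma E2: "\<forall>x. (x,x) \<notin> Edg R \<Longrightarrow> (u,v) \<in> rep_edges R m \<Longrightarrow> (x,y) \<in> Glue R (rep_typ R m u v) \<Longrightarrow>
  (u@[x], v@[y]) \<in> rep_edges R (Suc m) \<and> rep_typ R (Suc m) (u@[x]) (v@[y]) = rep_typ R m u v"
proof (cases m)
  case 0
  assume "(u,v) \<in> rep_edges R m"
  then show ?thesis using 0 by auto
next
  case (Suc k)
  assume a: "\<forall>x. (x,x) \<notin> Edg R" "(u,v) \<in> rep_edges R m" "(x,y) \<in> Glue R (rep_typ R m u v)"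
  then have "length u = Suc k" "length v = Suc k" "u \<noteq> v" using Suc rep_edges_len rep_edges_irr by blast+
  then show ?thesis using a Suc by auto
qed

definition adjG :: "('a,'t) igs \<Rightarrow> nat \<Rightarrow> 'a list \<Rightarrow> 'a list \<Rightarrow> bool" where
  "adjG R m a b \<longleftrightarrow> (a,b) \<in> rep_edges R m \<or> (b,a) \<in> rep_edges R m"

lemma is_path_succ: "is_path R m p \<longleftrightarrow> p \<noteq> [] \<and> set p \<subseteq> words R m \<and> successively (adjG R m) p"
  by (simp add: is_path_def successively_conv_nth adjG_def)

fun lift :: "'a list list \<Rightarrow> 'a list list \<Rightarrow> 'a list list" where
  "lift (w#p) (q#qs) = map (\<lambda>y. w@[y]) q @ lift p qs"
| "lift _ _ = []"

lemma set_lift: "set (lift p qs) \<subseteq> {w@[y] | w y. w \<in> set p \<and> y \<in> \<Union>(set ` set qs)}"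
  by (induction p qs rule: lift.induct) fastforce+

lemma butlast_lift: "butlast ` set (lift p qs) \<subseteq> set p"
  by (induction p qs rule: lift.induct) auto

lemma hd_lift: "p \<noteq> [] \<Longrightarrow> qs \<noteq> [] \<Longrightarrow> hd qs \<noteq> [] \<Longrightarrow> hd (lift p qs) = hd p @ [hd (hd qs)]"
  by (cases p; cases qs) (auto simp: hd_append hd_map)

lemma last_lift: "length p = length qs \<Longrightarrow> p \<noteq> [] \<Longrightarrow> \<forall>q\<in>set qs. q \<noteq> [] \<Longrightarrow>
   last (lift p qs) = last p @ [last (last qs)]"
proof (induction p qs rule: lift.induct)
  case (1 w p q qs)
  then show ?case by (cases p; cases qs) (auto simp: last_map)
qed auto

lemma lift_ne: "p \<noteq> [] \<Longrightarrow> qs \<noteq> [] \<Longrightarrow> hd qs \<noteq> [] \<Longrightarrow> lift p qs \<noteq> []"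
  by (cases p; cases qs) auto

lemma lift_words: "set p \<subseteq> words R m \<Longrightarrow> \<forall>q\<in>set qs. set q \<subseteq> Sym R \<Longrightarrow> set (lift p qs) \<subseteq> words R (Suc m)"
  by (induction p qs rule: lift.induct) (auto simp: words_def)

definition link :: "('a,'t) igs \<Rightarrow> nat \<Rightarrow> 'a list \<Rightarrow> 'a list \<Rightarrow> 'a list \<Rightarrow> 'a list \<Rightarrow> bool" where
  "link R m w q v q' \<longleftrightarrow>
     ((w,v) \<in> rep_edges R m \<and> (last q, hd q') \<in> Glue R (rep_typ R m w v)) \<or>
     ((v,w) \<in> rep_edges R m \<and> (hd q', last q) \<in> Glue R (rep_typ R m v w))"

fun links :: "('a,'t) igs \<Rightarrow> nat \<Rightarrow> 'a list list \<Rightarrow> 'a list list \<Rightarrow> bool" where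
  "links R m (w#v#p) (q#q'#qs) = (link R m w q v q' \<and> links R m (v#p) (q'#qs))"
| "links R m _ _ = True"

definition adj1 :: "('a,'t) igs \<Rightarrow> 'a \<Rightarrow> 'a \<Rightarrow> bool" where
  "adj1 R x y \<longleftrightarrow> (x,y) \<in> Edg R \<or> (y,x) \<in> Edg R"

lemma lift_path:
  assumes irr: "\<forall>x. (x,x) \<notin> Edg R"
  shows "length p = length qs \<Longrightarrow> set p \<subseteq> words R m \<Longrightarrow>
    (\<forall>q\<in>set qs. q \<noteq> [] \<and> successively (adj1 R) q) \<Longrightarrow> links R m p qs \<Longrightarrow>
    successively (adjG R (Suc m)) (lift p qs)"
proof (induction p arbitrary: qs)
  case Nil
  then show ?case by simp
next
  case (Cons w p)
  then obtain q qs' where qs: "qs = q # qs'" by (cases qs) auto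
  have w: "w \<in> words R m" using Cons.prems(2) by simp
  have s1: "successively (adjG R (Suc m)) (map (\<lambda>y. w@[y]) q)"
    unfolding successively_map
    using Cons(4) qs E1[OF w] by (auto simp: adj1_def adjG_def elim!: successively_mono)
  have lk: "links R m p qs'" using Cons(5) qs by (cases p; cases qs') auto
  have s2: "successively (adjG R (Suc m)) (lift p qs')"
    using Cons.IH[of qs'] Cons.prems qs lk by simp
  have jn: "adjG R (Suc m) (last (map (\<lambda>y. w@[y]) q)) (hd (lift p qs'))" if "p \<noteq> []"
  proof -
    obtain v p' where p: "p = v # p'" using \<open>p \<noteq> []\<close> by (cases p) auto
    obtain q' qs'' where q': "qs' = q' # qs''" using Cons(2) qs p by (cases qs') auto
    have ne: "q \<noteq> []" "q' \<noteq> []" using Cons(4) qs q' by auto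
    have "link R m w q v q'" using Cons(5) qs p q' by simp
    then have "adjG R (Suc m) (w @ [last q]) (v @ [hd q'])"
      using E2[OF irr, of w v m "last q" "hd q'"] E2[OF irr, of v w m "hd q'" "last q"]
      unfolding link_def adjG_def by blast
    moreover have "hd (lift p qs') = v @ [hd q']" using hd_lift[of p qs'] p q' ne by simp
    moreover have "last (map (\<lambda>y. w@[y]) q) = w @ [last q]" using ne by (simp add: last_map)
    ultimately show ?thesis by simp
  qed
  show ?case
  proof (cases "p = []")
    case True
    then show ?thesis using qs s1 by simp
  next
    case False
    then show ?thesis using s1 s2 jn[OF False] qs by (simp add: successively_append_iff)
  qed
qed

definition fwdG :: "('a,'t) igs \<Rightarrow> nat \<Rightarrow> 't \<Rightarrow> 'a list \<Rightarrow> 'a list \<Rightarrow> bool" where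
  "fwdG R m t a b \<longleftrightarrow> (a,b) \<in> rep_edges R m \<and> rep_typ R m a b = t"

lemma lift_fwd:
  assumes irr: "\<forall>x. (x,x) \<notin> Edg R"
  shows "length p = length qs \<Longrightarrow> set p \<subseteq> words R m \<Longrightarrow> successively (fwdG R m t) p \<Longrightarrow>
    (\<forall>q\<in>set qs. q \<noteq> [] \<and> successively (\<lambda>x y. (x,y) \<in> Edg R \<and> ttyp R (x,y) = t) q) \<Longrightarrow>
    successively (\<lambda>q q'. (last q, hd q') \<in> Glue R t) qs \<Longrightarrow>
    successively (fwdG R (Suc m) t) (lift p qs)"
proof (induction p arbitrary: qs)
  case Nil
  then show ?case by simp
next
  case (Cons w p)
  then obtain q qs' where qs: "qs = q # qs'" by (cases qs) auto
  have w: "w \<in> words R m" using Cons.prems(2) by simp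
  have s1: "successively (fwdG R (Suc m) t) (map (\<lambda>y. w@[y]) q)"
    unfolding successively_map
    using Cons(5) qs E1[OF w] by (auto simp: fwdG_def elim!: successively_mono)
  have s2: "successively (fwdG R (Suc m) t) (lift p qs')"
  proof -
    have "successively (fwdG R m t) p" using Cons.prems(3) by (cases p) auto
    moreover have "successively (\<lambda>q q'. (last q, hd q') \<in> Glue R t) qs'" using Cons.prems(5) qs by (cases qs') auto
    ultimately show ?thesis using Cons.IH[of qs'] Cons.prems qs by simp
  qed
  have jn: "fwdG R (Suc m) t (last (map (\<lambda>y. w@[y]) q)) (hd (lift p qs'))" if "p \<noteq> []"
  proof -
    obtain v p' where p: "p = v # p'" using \<open>p \<noteq> []\<close> by (cases p) auto
    obtain q' qs'' where q': "qs' = q' # qs''" using Cons(2) qs p by (cases qs') auto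
    have ne: "q \<noteq> []" "q' \<noteq> []" using Cons(5) qs q' by auto
    have "fwdG R m t w v" using Cons(4) p by simp
    moreover have "(last q, hd q') \<in> Glue R t" using Cons(6) qs q' by simp
    ultimately have "fwdG R (Suc m) t (w @ [last q]) (v @ [hd q'])"
      using E2[OF irr, of w v m "last q" "hd q'"] unfolding fwdG_def by simp
    moreover have "hd (lift p qs') = v @ [hd q']" using hd_lift[of p qs'] p q' ne by simp
    moreover have "last (map (\<lambda>y. w@[y]) q) = w @ [last q]" using ne by (simp add: last_map)
    ultimately show ?thesis by simp
  qed
  show ?case
  proof (cases "p = []")
    case True
    then show ?thesis using qs s1 by simp
  next
    case False
    then show ?thesis using s1 s2 jn[OF False] qs by (simp add: successively_append_iff)
  qed
qed

fun pdisj :: "'a list list \<Rightarrow> 'a list list \<Rightarrow> bool" where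
  "pdisj (q#Q) (q'#Q') = (set q \<inter> set q' = {} \<and> pdisj Q Q')"
| "pdisj _ _ = True"

lemma lift_disj: "distinct p \<Longrightarrow> length p = length qs \<Longrightarrow> length p = length qs' \<Longrightarrow> pdisj qs qs' \<Longrightarrow>
   set (lift p qs) \<inter> set (lift p qs') = {}"
proof (induction p arbitrary: qs qs')
  case Nil then show ?case by simp
next
  case (Cons w p)
  obtain q Q where qs: "qs = q # Q" using Cons.prems by (cases qs) auto
  obtain q' Q' where qs': "qs' = q' # Q'" using Cons.prems by (cases qs') auto
  have "w \<notin> set p" using Cons.prems by simp
  then have a: "w @ [y] \<notin> set (lift p Q)" "w @ [y] \<notin> set (lift p Q')" for y
    using set_lift[of p Q] set_lift[of p Q'] by auto
  have "set (lift p Q) \<inter> set (lift p Q') = {}" using Cons.IH[of Q Q'] Cons.prems qs qs' by simp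
  then show ?case using qs qs' a Cons(5) by auto
qed

lemma lift_distinct: "distinct p \<Longrightarrow> length p = length qs \<Longrightarrow> \<forall>q\<in>set qs. distinct q \<Longrightarrow> distinct (lift p qs)"
proof (induction p arbitrary: qs)
  case Nil then show ?case by simp
next
  case (Cons w p)
  obtain q Q where qs: "qs = q # Q" using Cons.prems by (cases qs) auto
  have "w \<notin> set p" using Cons.prems by simp
  then have a: "w @ [y] \<notin> set (lift p Q)" for y
    using set_lift[of p Q] by auto
  show ?case using qs a Cons.IH[of Q] Cons.prems by (auto simp: distinct_map inj_on_def)
qed

lemma double_family:
  fixes D :: "'a list list \<Rightarrow> bool \<Rightarrow> 'a list list"
  assumes fin: "finite F"
    and disj: "\<forall>p\<in>F. \<forall>q\<in>F. p \<noteq> q \<longrightarrow> set p \<inter> set q = {}"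
    and D: "\<And>p b. p \<in> F \<Longrightarrow> D p b \<in> G \<and> D p b \<noteq> [] \<and> butlast ` set (D p b) \<subseteq> set p"
    and D2: "\<And>p. p \<in> F \<Longrightarrow> set (D p True) \<inter> set (D p False) = {}"
  shows "\<exists>F'. F' \<subseteq> G \<and> finite F' \<and> card F' = 2 * card F \<and>
           (\<forall>p\<in>F'. \<forall>q\<in>F'. p \<noteq> q \<longrightarrow> set p \<inter> set q = {})"
proof -
  have key: "p = q \<and> b = c" if th: "p \<in> F" "q \<in> F" "set (D p b) \<inter> set (D q c) \<noteq> {}" for p q b c
  proof -
    obtain z where z: "z \<in> set (D p b)" "z \<in> set (D q c)" using th(3) by blast
    have "butlast z \<in> set p" "butlast z \<in> set q" using z D[OF th(1), of b] D[OF th(2), of c] by blast+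
    then have "p = q" using disj th by blast
    moreover have "b = c" using D2 \<open>p = q\<close> th z by (cases b; cases c) auto
    ultimately show ?thesis by simp
  qed
  let ?D = "\<lambda>(p,b). D p b"
  have inj: "inj_on ?D (F \<times> UNIV)"
  proof (rule inj_onI, clarify)
    fix p b q c assume a: "p \<in> F" "q \<in> F" "D p b = D q c"
    then have "set (D p b) \<inter> set (D q c) \<noteq> {}" using D[OF a(1)] by (cases "D p b") auto
    then show "p = q \<and> b = c" using key a by blast
  qed
  show ?thesis
  proof (intro exI conjI)
    show "?D ` (F \<times> UNIV) \<subseteq> G" using D by auto
    show "finite (?D ` (F \<times> UNIV))" using fin by simp
    show "card (?D ` (F \<times> UNIV)) = 2 * card F"
      using card_image[OF inj] fin by (simp add: card_cartesian_product)
    show "\<forall>x\<in>?D ` (F \<times> UNIV). \<forall>y\<in>?D ` (F \<times> UNIV). x \<noteq> y \<longrightarrow> set x \<inter> set y = {}"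
      using key by fastforce
  qed
qed

lemma many_from_families:
  assumes "\<And>m. \<exists>F. F \<subseteq> Theta R m t \<and> finite F \<and> card F = 2 ^ m \<and>
           (\<forall>p\<in>F. \<forall>q\<in>F. p \<noteq> q \<longrightarrow> set p \<inter> set q = {})"
    and "t \<in> Typs R"
  shows "has_many_disjoint_paths R"
  unfolding has_many_disjoint_paths_def
proof (intro allI impI)
  fix M :: nat assume "M > 0"
  obtain F where F: "F \<subseteq> Theta R M t" "finite F" "card F = 2 ^ M"
     "\<forall>p\<in>F. \<forall>q\<in>F. p \<noteq> q \<longrightarrow> set p \<inter> set q = {}" using assms(1)[of M] by blast
  have "M \<le> card F" using F(3) less_exp[of M] by simp
  moreover have "1 \<le> M" using \<open>M > 0\<close> by simp
  ultimately show "\<exists>m t. 1 \<le> m \<and> t \<in> Typs R \<and> (\<exists>F. F \<subseteq> Theta R m t \<and> finite F \<and> M \<le> card F \<and>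
      (\<forall>p\<in>F. \<forall>q\<in>F. p \<noteq> q \<longrightarrow> set p \<inter> set q = {}))"
    apply (intro exI[of _ M] exI[of _ t] conjI exI[of _ F])
    using F assms(2) by simp_all
qed



lemma successively_replicate: "P x x \<Longrightarrow> successively P (replicate n x)"
proof (induction n)
  case (Suc n)
  then show ?case by (cases n) auto
qed simp

definition csy :: "nat \<Rightarrow> nat \<Rightarrow> nat \<Rightarrow> csym" where
  "csy d k b = (k # b # replicate (d - 2) 1, 1)"

definition cline :: "nat \<Rightarrow> nat \<Rightarrow> nat \<Rightarrow> csym list" where
  "cline d L b = map (\<lambda>k. csy d k b) [1..<L+1]"

lemma csy_nth_other: "i < d \<Longrightarrow> i \<noteq> 0 \<Longrightarrow> b \<in> {1, L} \<Longrightarrow> fst (csy d k b) ! i \<in> {1, L}"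
  by (cases i) (auto simp: csy_def nth_Cons split: nat.split)

lemma csy_star: "b \<in> {1, L} \<Longrightarrow> star_cond d L 0 (csy d k b)"
  unfolding star_cond_def using csy_nth_other by (auto simp: csy_def)

lemma csy_agree: "agree_off d 0 (csy d k b) (csy d k' b)"
  unfolding agree_off_def by (auto simp: csy_def nth_Cons split: nat.split)

lemma csy_syms: "d \<ge> 2 \<Longrightarrow> sh \<ge> 1 \<Longrightarrow> 1 \<le> k \<Longrightarrow> k \<le> L \<Longrightarrow> b \<in> {1, L} \<Longrightarrow> L \<ge> 1 \<Longrightarrow>
  csy d k b \<in> cube_syms d L sh"
  by (auto simp: csy_def cube_syms_def)

locale cub =
  fixes d L sh :: nat and R :: "(csym, nat) igs"
  assumes cub: "cubical_IGS d L sh R" and d2: "d \<ge> 2"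
begin

lemma basics: "sh \<ge> 1" "L \<ge> 3" "is_IGS R" "sub_system R (cube_full d L sh)"
  using cub by (auto simp: cubical_IGS_def)

lemma irr: "\<forall>x. (x,x) \<notin> Edg R"
  using basics(3) unfolding is_IGS_def by blast

lemma C1: "j < d \<Longrightarrow> w \<in> cube_syms d L sh \<Longrightarrow> star_cond d L j w \<Longrightarrow> w \<in> Sym R"
  using cub unfolding cubical_IGS_def by blast

lemma C2: "j < d \<Longrightarrow> w \<in> cube_syms d L sh \<Longrightarrow> v \<in> cube_syms d L sh \<Longrightarrow>
   star_cond d L j w \<Longrightarrow> star_cond d L j v \<Longrightarrow> agree_off d j w v \<Longrightarrow> snd w = snd v \<Longrightarrow>
   fst v ! j = fst w ! j + 1 \<Longrightarrow> (w, v) \<in> Edg R"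
  using cub unfolding cubical_IGS_def by blast

lemma C3: "j < d \<Longrightarrow> w \<in> cube_syms d L sh \<Longrightarrow> v \<in> cube_syms d L sh \<Longrightarrow>
   star_cond d L j w \<Longrightarrow> star_cond d L j v \<Longrightarrow> agree_off d j w v \<Longrightarrow> snd w = snd v \<Longrightarrow>
   fst w ! j = L \<Longrightarrow> fst v ! j = 1 \<Longrightarrow> (w, v) \<in> Glue R j"
  using cub unfolding cubical_IGS_def by blast

lemma sym_in: "1 \<le> k \<Longrightarrow> k \<le> L \<Longrightarrow> b \<in> {1, L} \<Longrightarrow> csy d k b \<in> Sym R"
  using C1[of 0 "csy d k b"] csy_syms[OF d2 basics(1)] csy_star basics(2) d2 by auto

lemma edge_in: "1 \<le> k \<Longrightarrow> k + 1 \<le> L \<Longrightarrow> b \<in> {1, L} \<Longrightarrow>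
   (csy d k b, csy d (k+1) b) \<in> Edg R \<and> ttyp R (csy d k b, csy d (k+1) b) = 0"
proof -
  assume a: "1 \<le> k" "k + 1 \<le> L" "b \<in> {1, L}"
  have e: "(csy d k b, csy d (k+1) b) \<in> Edg R"
    using C2[of 0 "csy d k b" "csy d (k+1) b"] csy_syms[OF d2 basics(1)] csy_star csy_agree basics(2) d2 a
    by (auto simp: csy_def)
  have "ttyp R (csy d k b, csy d (k+1) b) = ttyp (cube_full d L sh) (csy d k b, csy d (k+1) b)"
    using basics(4) e unfolding sub_system_def by blast
  also have "\<dots> = 0" by (simp add: cube_full_def csy_def)
  finally show ?thesis using e by simp
qed

lemma glue_in: "b \<in> {1, L} \<Longrightarrow> (csy d L b, csy d 1 b) \<in> Glue R 0"
  using C3[of 0 "csy d L b" "csy d 1 b"] csy_syms[OF d2 basics(1)] csy_star csy_agree basics(2) d2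
  by (auto simp: csy_def)

lemma cline_props: assumes b: "b \<in> {1, L}"
  shows "cline d L b \<noteq> []" "hd (cline d L b) = csy d 1 b" "last (cline d L b) = csy d L b"
    "set (cline d L b) \<subseteq> Sym R"
    "successively (\<lambda>x y. (x,y) \<in> Edg R \<and> ttyp R (x,y) = 0) (cline d L b)"
proof -
  have L: "L \<ge> 3" using basics by simp
  show "cline d L b \<noteq> []" using L by (simp add: cline_def)
  show "hd (cline d L b) = csy d 1 b" using L by (simp add: cline_def upt_rec)
  show "last (cline d L b) = csy d L b" using L by (simp add: cline_def last_map)
  show "set (cline d L b) \<subseteq> Sym R" using sym_in b by (auto simp: cline_def)
  show "successively (\<lambda>x y. (x,y) \<in> Edg R \<and> ttyp R (x,y) = 0) (cline d L b)"
    unfolding successively_conv_nth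
  proof (intro allI impI)
    fix i assume "Suc i < length (cline d L b)"
    then have "Suc i < L" by (simp add: cline_def del: upt_Suc)
    then show "(cline d L b ! i, cline d L b ! Suc i) \<in> Edg R \<and> ttyp R (cline d L b ! i, cline d L b ! Suc i) = 0"
      using edge_in[of "Suc i" b] b by (simp add: cline_def del: upt_Suc)
  qed
qed

lemma cline_disj: "set (cline d L 1) \<inter> set (cline d L L) = {}"
  using basics(2) by (auto simp: cline_def csy_def)

definition Gc :: "nat \<Rightarrow> csym list list set" where
  "Gc m = {p. p \<in> Theta R m 0 \<and> successively (fwdG R m 0) p}"

definition Dc :: "csym list list \<Rightarrow> bool \<Rightarrow> csym list list" where
  "Dc p b = lift p (replicate (length p) (cline d L (if b then 1 else L)))"

lemma Dc_props: assumes p: "p \<in> Gc m"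
  shows "Dc p b \<in> Gc (Suc m) \<and> Dc p b \<noteq> [] \<and> butlast ` set (Dc p b) \<subseteq> set p"
proof -
  define c where "c = (if b then 1 else L)"
  have c: "c \<in> {1, L}" by (simp add: c_def)
  let ?qs = "replicate (length p) (cline d L c)"
  have Dc: "Dc p b = lift p ?qs" by (simp add: Dc_def c_def)
  have pth: "is_path R m p" and hp: "hd p \<in> glue_minus R m 0" and lp: "last p \<in> glue_plus R m 0"
    and sp: "successively (fwdG R m 0) p"
    using p by (auto simp: Gc_def Theta_def)
  have pne: "p \<noteq> []" and pw: "set p \<subseteq> words R m" using pth by (auto simp: is_path_def)
  note cl = cline_props[OF c]
  have ne: "lift p ?qs \<noteq> []" using lift_ne[of p ?qs] pne cl(1) by simp
  have w: "set (lift p ?qs) \<subseteq> words R (Suc m)" using lift_words[OF pw, of ?qs] cl(4) by simp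
  have f: "successively (fwdG R (Suc m) 0) (lift p ?qs)"
    using lift_fwd[OF irr, of p ?qs m 0] pw sp cl glue_in[OF c] by (simp add: successively_replicate)
  have sa: "successively (adjG R (Suc m)) (lift p ?qs)"
    using f by (rule successively_mono) (auto simp: fwdG_def adjG_def)
  have h: "hd (lift p ?qs) = hd p @ [csy d 1 c]" using hd_lift[of p ?qs] pne cl by simp
  have l: "last (lift p ?qs) = last p @ [csy d L c]" using last_lift[of p ?qs] pne cl by simp
  have g1: "csy d 1 c \<in> snd ` Glue R 0" using glue_in[OF c] by force
  have g2: "csy d L c \<in> fst ` Glue R 0" using glue_in[OF c] by force
  have "lift p ?qs \<in> Gc (Suc m)"
    unfolding Gc_def Theta_def is_path_succ using ne w sa f h l g1 g2 hp lp
    by (auto simp: glue_minus_def glue_plus_def)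
  then show ?thesis using Dc ne butlast_lift by simp
qed

lemma Dc_disj: "set (Dc p True) \<inter> set (Dc p False) = {}"
proof -
  have "set (Dc p True) \<subseteq> {w@[y] | w y. y \<in> set (cline d L 1)}"
    using set_lift[of p "replicate (length p) (cline d L 1)"] by (auto simp: Dc_def)
  moreover have "set (Dc p False) \<subseteq> {w@[y] | w y. y \<in> set (cline d L L)}"
    using set_lift[of p "replicate (length p) (cline d L L)"] by (auto simp: Dc_def)
  ultimately show ?thesis using cline_disj by blast
qed

lemma families: "\<exists>F. F \<subseteq> Gc m \<and> finite F \<and> card F = 2 ^ m \<and>
           (\<forall>p\<in>F. \<forall>q\<in>F. p \<noteq> q \<longrightarrow> set p \<inter> set q = {})"
proof (induction m)
  case 0
  have "[[]] \<in> Gc 0"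
    by (simp add: Gc_def Theta_def is_path_def words_def glue_minus_def glue_plus_def)
  then show ?case by (intro exI[of _ "{[[]]}"]) auto
next
  case (Suc m)
  from Suc.IH obtain F where F: "F \<subseteq> Gc m \<and> finite F \<and> card F = 2 ^ m \<and>
     (\<forall>p\<in>F. \<forall>q\<in>F. p \<noteq> q \<longrightarrow> set p \<inter> set q = {})" by (rule exE)
  have F1: "F \<subseteq> Gc m" and F2: "finite F" and F3: "card F = 2 ^ m"
    and F4: "\<forall>p\<in>F. \<forall>q\<in>F. p \<noteq> q \<longrightarrow> set p \<inter> set q = {}" using F by simp_all
  have "\<exists>F'. F' \<subseteq> Gc (Suc m) \<and> finite F' \<and> card F' = 2 * card F \<and>
           (\<forall>p\<in>F'. \<forall>q\<in>F'. p \<noteq> q \<longrightarrow> set p \<inter> set q = {})"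
    apply (rule double_family[OF F2 F4, of Dc])
    subgoal for p b using Dc_props[of p m b] F1 by auto
    subgoal for p by (rule Dc_disj)
    done
  then show ?case using F3 by simp
qed

theorem many: "has_many_disjoint_paths R"
proof (rule many_from_families)
  show "0 \<in> Typs R" using basics(4) d2 by (simp add: sub_system_def cube_full_def)
  fix m show "\<exists>F. F \<subseteq> Theta R m 0 \<and> finite F \<and> card F = 2 ^ m \<and>
           (\<forall>p\<in>F. \<forall>q\<in>F. p \<noteq> q \<longrightarrow> set p \<inter> set q = {})"
  proof -
    from families[of m] obtain F where F: "F \<subseteq> Gc m \<and> finite F \<and> card F = 2 ^ m \<and>
       (\<forall>p\<in>F. \<forall>q\<in>F. p \<noteq> q \<longrightarrow> set p \<inter> set q = {})" by (rule exE)
    have "F \<subseteq> Theta R m 0" using F unfolding Gc_def by auto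
    then show ?thesis using F by (intro exI[of _ F]) simp
  qed
qed

end



definition AP :: "(nat \<times> nat) set" where
  "AP = {(0,1),(1,2),(2,3),(3,4),(4,0),(1,0),(2,1),(3,2),(4,3),(0,4)}"

definition ptab :: "((nat \<times> nat \<times> ptype \<times> bool) \<times> (nat list \<times> nat list \<times> nat \<times> nat)) list" where
  "ptab = [((0,1,Ta,True),([0,4,3,2],[1],4,0)),
    ((0,1,Ta,False),([0],[1,2,3,4],1,2)),
    ((0,1,Tb,True),([0,4,3],[1,2],0,1)),
    ((0,1,Tb,False),([0],[1],3,2)),
    ((0,1,Tc,True),([0,4],[1,2,3],1,2)),
    ((0,1,Tc,False),([0,4,3,2],[1],3,4)),
    ((0,1,Td,True),([0],[1,2,3,4],2,3)),
    ((0,1,Td,False),([0,4,3],[1,2],4,0)),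
    ((0,1,Te,True),([0],[1],4,3)),
    ((0,1,Te,False),([0,4],[1,2,3],0,1)),
    ((1,2,Ta,True),([1],[2],0,4)),
    ((1,2,Ta,False),([1,0],[2,3,4],1,2)),
    ((1,2,Tb,True),([1,0,4,3],[2],0,1)),
    ((1,2,Tb,False),([1],[2,3,4,0],2,3)),
    ((1,2,Tc,True),([1,0,4],[2,3],1,2)),
    ((1,2,Tc,False),([1],[2],4,3)),
    ((1,2,Td,True),([1,0],[2,3,4],2,3)),
    ((1,2,Td,False),([1,0,4,3],[2],4,0)),
    ((1,2,Te,True),([1],[2,3,4,0],3,4)),
    ((1,2,Te,False),([1,0,4],[2,3],0,1)),
    ((2,3,Ta,True),([2],[3,4,0,1],4,0)),
    ((2,3,Ta,False),([2,1,0],[3,4],1,2)),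
    ((2,3,Tb,True),([2],[3],1,0)),
    ((2,3,Tb,False),([2,1],[3,4,0],2,3)),
    ((2,3,Tc,True),([2,1,0,4],[3],1,2)),
    ((2,3,Tc,False),([2],[3,4,0,1],3,4)),
    ((2,3,Td,True),([2,1,0],[3,4],2,3)),
    ((2,3,Td,False),([2],[3],0,4)),
    ((2,3,Te,True),([2,1],[3,4,0],3,4)),
    ((2,3,Te,False),([2,1,0,4],[3],0,1)),
    ((3,4,Ta,True),([3,2],[4,0,1],4,0)),
    ((3,4,Ta,False),([3,2,1,0],[4],1,2)),
    ((3,4,Tb,True),([3],[4,0,1,2],0,1)),
    ((3,4,Tb,False),([3,2,1],[4,0],2,3)),
    ((3,4,Tc,True),([3],[4],2,1)),
    ((3,4,Tc,False),([3,2],[4,0,1],3,4)),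
    ((3,4,Td,True),([3,2,1,0],[4],2,3)),
    ((3,4,Td,False),([3],[4,0,1,2],4,0)),
    ((3,4,Te,True),([3,2,1],[4,0],3,4)),
    ((3,4,Te,False),([3],[4],1,0)),
    ((4,0,Ta,True),([4,3,2],[0,1],4,0)),
    ((4,0,Ta,False),([4],[0],2,1)),
    ((4,0,Tb,True),([4,3],[0,1,2],0,1)),
    ((4,0,Tb,False),([4,3,2,1],[0],2,3)),
    ((4,0,Tc,True),([4],[0,1,2,3],1,2)),
    ((4,0,Tc,False),([4,3,2],[0,1],3,4)),
    ((4,0,Td,True),([4],[0],3,2)),
    ((4,0,Td,False),([4,3],[0,1,2],4,0)),
    ((4,0,Te,True),([4,3,2,1],[0],3,4)),
    ((4,0,Te,False),([4],[0,1,2,3],0,1)),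
    ((1,0,Ta,True),([1],[0,4,3,2],0,4)),
    ((1,0,Ta,False),([1,2,3,4],[0],2,1)),
    ((1,0,Tb,True),([1,2],[0,4,3],1,0)),
    ((1,0,Tb,False),([1],[0],2,3)),
    ((1,0,Tc,True),([1,2,3],[0,4],2,1)),
    ((1,0,Tc,False),([1],[0,4,3,2],4,3)),
    ((1,0,Td,True),([1,2,3,4],[0],3,2)),
    ((1,0,Td,False),([1,2],[0,4,3],0,4)),
    ((1,0,Te,True),([1],[0],3,4)),
    ((1,0,Te,False),([1,2,3],[0,4],1,0)),
    ((2,1,Ta,True),([2],[1],4,0)),
    ((2,1,Ta,False),([2,3,4],[1,0],2,1)),
    ((2,1,Tb,True),([2],[1,0,4,3],1,0)),
    ((2,1,Tb,False),([2,3,4,0],[1],3,2)),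
    ((2,1,Tc,True),([2,3],[1,0,4],2,1)),
    ((2,1,Tc,False),([2],[1],3,4)),
    ((2,1,Td,True),([2,3,4],[1,0],3,2)),
    ((2,1,Td,False),([2],[1,0,4,3],0,4)),
    ((2,1,Te,True),([2,3,4,0],[1],4,3)),
    ((2,1,Te,False),([2,3],[1,0,4],1,0)),
    ((3,2,Ta,True),([3,4,0,1],[2],0,4)),
    ((3,2,Ta,False),([3,4],[2,1,0],2,1)),
    ((3,2,Tb,True),([3],[2],0,1)),
    ((3,2,Tb,False),([3,4,0],[2,1],3,2)),
    ((3,2,Tc,True),([3],[2,1,0,4],2,1)),
    ((3,2,Tc,False),([3,4,0,1],[2],4,3)),
    ((3,2,Td,True),([3,4],[2,1,0],3,2)),
    ((3,2,Td,False),([3],[2],4,0)),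
    ((3,2,Te,True),([3,4,0],[2,1],4,3)),
    ((3,2,Te,False),([3],[2,1,0,4],1,0)),
    ((4,3,Ta,True),([4,0,1],[3,2],0,4)),
    ((4,3,Ta,False),([4],[3,2,1,0],2,1)),
    ((4,3,Tb,True),([4,0,1,2],[3],1,0)),
    ((4,3,Tb,False),([4,0],[3,2,1],3,2)),
    ((4,3,Tc,True),([4],[3],1,2)),
    ((4,3,Tc,False),([4,0,1],[3,2],4,3)),
    ((4,3,Td,True),([4],[3,2,1,0],3,2)),
    ((4,3,Td,False),([4,0,1,2],[3],0,4)),
    ((4,3,Te,True),([4,0],[3,2,1],4,3)),
    ((4,3,Te,False),([4],[3],0,1)),
    ((0,4,Ta,True),([0,1],[4,3,2],0,4)),
    ((0,4,Ta,False),([0],[4],1,2)),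
    ((0,4,Tb,True),([0,1,2],[4,3],1,0)),
    ((0,4,Tb,False),([0],[4,3,2,1],3,2)),
    ((0,4,Tc,True),([0,1,2,3],[4],2,1)),
    ((0,4,Tc,False),([0,1],[4,3,2],4,3)),
    ((0,4,Td,True),([0],[4],2,3)),
    ((0,4,Td,False),([0,1,2],[4,3],0,4)),
    ((0,4,Te,True),([0],[4,3,2,1],4,3)),
    ((0,4,Te,False),([0,1,2,3],[4],1,0))]"
definition pfin :: "((nat \<times> nat) \<times> (nat list \<times> nat list)) list" where
  "pfin = [((0,1),([0,4,3,2],[1])),
    ((1,2),([1],[2])),
    ((2,3),([2],[3,4,0,1])),
    ((3,4),([3,2],[4,0,1])),
    ((4,0),([4,3,2],[0,1])),
    ((1,0),([1],[0,4,3,2])),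
    ((2,1),([2],[1])),
    ((3,2),([3,4,0,1],[2])),
    ((4,3),([4,0,1],[3,2])),
    ((0,4),([0,1],[4,3,2]))]"


definition proute :: "nat \<Rightarrow> nat \<Rightarrow> ptype \<Rightarrow> bool \<Rightarrow> nat list \<times> nat list \<times> nat \<times> nat" where
  "proute e e' t b = the (map_of ptab (e, e', t, b))"

definition pfinal :: "nat \<Rightarrow> nat \<Rightarrow> nat list \<times> nat list" where
  "pfinal e e' = the (map_of pfin (e, e'))"

definition qok :: "nat list \<Rightarrow> bool" where
  "qok q \<longleftrightarrow> q \<noteq> [] \<and> set q \<subseteq> Sym pentagon \<and> successively (adj1 pentagon) q \<and> distinct q"

definition rok :: "nat \<Rightarrow> nat \<Rightarrow> ptype \<Rightarrow> bool \<Rightarrow> nat list \<times> nat list \<times> nat \<times> nat \<Rightarrow> bool" where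
  "rok e e' t b r = (case r of (q, q', x, x') \<Rightarrow>
     qok q \<and> qok q' \<and> hd q = e \<and> hd q' = e' \<and> set q \<inter> set q' = {} \<and> (x, x') \<in> AP \<and>
     (if b then (last q, x) \<in> Glue pentagon t \<and> (last q', x') \<in> Glue pentagon t
      else (x, last q) \<in> Glue pentagon t \<and> (x', last q') \<in> Glue pentagon t))"

definition fok :: "nat \<Rightarrow> nat \<Rightarrow> nat list \<times> nat list \<Rightarrow> bool" where
  "fok e e' r = (case r of (q, q') \<Rightarrow>
     qok q \<and> qok q' \<and> hd q = e \<and> hd q' = e' \<and> set q \<inter> set q' = {} \<and>
     last q \<in> {1, 2} \<and> last q' \<in> {1, 2})"

lemma ptab_ok: "list_all (\<lambda>((e, e', t, b), r). rok e e' t b r) ptab"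
  unfolding ptab_def by (simp add: rok_def qok_def pentagon_def adj1_def AP_def)

lemma pfin_ok: "list_all (\<lambda>((e, e'), r). fok e e' r) pfin"
  unfolding pfin_def by (simp add: fok_def qok_def pentagon_def adj1_def)

lemma ptab_dom: "(e, e') \<in> AP \<Longrightarrow> map_of ptab (e, e', t, b) \<noteq> None"
  unfolding AP_def by (cases t; cases b; auto simp: ptab_def)

lemma pfin_dom: "(e, e') \<in> AP \<Longrightarrow> map_of pfin (e, e') \<noteq> None"
  unfolding AP_def by (auto simp: pfin_def)

lemma proute_ok: "(e, e') \<in> AP \<Longrightarrow> rok e e' t b (proute e e' t b)"
proof -
  assume "(e, e') \<in> AP"
  then obtain r where r: "map_of ptab (e, e', t, b) = Some r" using ptab_dom by blast
  then have "((e, e', t, b), r) \<in> set ptab" by (rule map_of_SomeD)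
  then have "rok e e' t b r" using ptab_ok by (auto simp: list_all_iff)
  then show ?thesis using r by (simp add: proute_def)
qed

lemma pfinal_ok: "(e, e') \<in> AP \<Longrightarrow> fok e e' (pfinal e e')"
proof -
  assume "(e, e') \<in> AP"
  then obtain r where r: "map_of pfin (e, e') = Some r" using pfin_dom by blast
  then have "((e, e'), r) \<in> set pfin" by (rule map_of_SomeD)
  then have "fok e e' r" using pfin_ok by (auto simp: list_all_iff)
  then show ?thesis using r by (simp add: pfinal_def)
qed

definition pdir :: "nat \<Rightarrow> nat list \<Rightarrow> nat list \<Rightarrow> bool" where
  "pdir m w v \<longleftrightarrow> (w, v) \<in> rep_edges pentagon m"

definition ptyp :: "nat \<Rightarrow> nat list \<Rightarrow> nat list \<Rightarrow> ptype" where
  "ptyp m w v = (if pdir m w v then rep_typ pentagon m w v else rep_typ pentagon m v w)"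

fun dbl :: "nat \<Rightarrow> nat list list \<Rightarrow> nat \<Rightarrow> nat \<Rightarrow> nat list list \<times> nat list list" where
  "dbl m (w # v # p) e e' = (case proute e e' (ptyp m w v) (pdir m w v) of (q, q', x, x') \<Rightarrow>
      (case dbl m (v # p) x x' of (Q, Q') \<Rightarrow> (q # Q, q' # Q')))"
| "dbl m [w] e e' = (case pfinal e e' of (q, q') \<Rightarrow> ([q], [q']))"
| "dbl m [] e e' = ([], [])"

definition dok :: "nat \<Rightarrow> nat list list \<Rightarrow> nat \<Rightarrow> nat \<Rightarrow> nat list list \<Rightarrow> nat list list \<Rightarrow> bool" where
  "dok m p e e' Q Q' \<longleftrightarrow> length Q = length p \<and> length Q' = length p \<and>
     (\<forall>q\<in>set Q \<union> set Q'. qok q) \<and> hd (hd Q) = e \<and> hd (hd Q') = e' \<and>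
     last (last Q) \<in> {1, 2} \<and> last (last Q') \<in> {1, 2} \<and>
     links pentagon m p Q \<and> links pentagon m p Q' \<and> pdisj Q Q'"

lemma link_step:
  assumes "adjG pentagon m w v"
    and "if pdir m w v then (y, x) \<in> Glue pentagon (ptyp m w v) else (x, y) \<in> Glue pentagon (ptyp m w v)"
    and "last q = y" and "hd q' = x"
  shows "link pentagon m w q v q'"
  using assms unfolding link_def adjG_def ptyp_def pdir_def by (auto split: if_splits)

lemma dbl_ok: "(e, e') \<in> AP \<Longrightarrow> p \<noteq> [] \<Longrightarrow> successively (adjG pentagon m) p \<Longrightarrow>
   dbl m p e e' = (Q, Q') \<Longrightarrow> dok m p e e' Q Q'"
proof (induction m p e e' arbitrary: Q Q' rule: dbl.induct)
  case (1 m w v p e e')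
  obtain q q' x x' where r: "proute e e' (ptyp m w v) (pdir m w v) = (q, q', x, x')"
    by (cases "proute e e' (ptyp m w v) (pdir m w v)") auto
  have rk: "rok e e' (ptyp m w v) (pdir m w v) (q, q', x, x')"
    using proute_ok[OF "1.prems"(1)] r by metis
  obtain Q1 Q1' where d: "dbl m (v # p) x x' = (Q1, Q1')" by (cases "dbl m (v # p) x x'") auto
  have QQ: "Q = q # Q1" "Q' = q' # Q1'" using "1.prems"(4) r d by auto
  have ap: "(x, x') \<in> AP" using rk by (simp add: rok_def)
  have sv: "successively (adjG pentagon m) (v # p)" using "1.prems"(3) by simp
  have adj: "adjG pentagon m w v" using "1.prems"(3) by simp
  have IH: "dok m (v # p) x x' Q1 Q1'" using "1.IH"[OF r[symmetric] refl refl ap _ sv d] by simp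
  obtain q1 Qr where q1: "Q1 = q1 # Qr" using IH by (cases Q1) (auto simp: dok_def)
  obtain q1' Qr' where q1': "Q1' = q1' # Qr'" using IH by (cases Q1') (auto simp: dok_def)
  have h1: "hd q1 = x" "hd q1' = x'" using IH q1 q1' by (auto simp: dok_def)
  have l1: "link pentagon m w q v q1"
    by (rule link_step[OF adj, of "last q" x]) (use rk h1 in \<open>auto simp: rok_def split: if_splits\<close>)
  have l2: "link pentagon m w q' v q1'"
    by (rule link_step[OF adj, of "last q'" x']) (use rk h1 in \<open>auto simp: rok_def split: if_splits\<close>)
  show ?case using IH rk QQ q1 q1' l1 l2 by (auto simp: dok_def rok_def)
next
  case (2 m w e e')
  obtain q q' where r: "pfinal e e' = (q, q')" by (cases "pfinal e e'") auto
  have fk: "fok e e' (q, q')" using pfinal_ok[OF "2.prems"(1)] r by metis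
  have QQ: "Q = [q]" "Q' = [q']" using "2.prems"(4) r by auto
  show ?case using fk QQ by (auto simp: dok_def fok_def)
next
  case (3 m e e')
  then show ?case by simp
qed

lemma irr_p: "\<forall>x. (x, x) \<notin> Edg pentagon"
  by (auto simp: pentagon_def)

definition Gp :: "nat \<Rightarrow> nat list list set" where
  "Gp m = {p. p \<in> Theta pentagon m Ta \<and> distinct p}"

definition Dp :: "nat \<Rightarrow> nat list list \<Rightarrow> bool \<Rightarrow> nat list list" where
  "Dp m p b = (case dbl m p 0 4 of (Q, Q') \<Rightarrow> lift p (if b then Q else Q'))"

lemma Dp_props: assumes p: "p \<in> Gp m"
  shows "(Dp m p b \<in> Gp (Suc m) \<and> Dp m p b \<noteq> [] \<and> butlast ` set (Dp m p b) \<subseteq> set p) \<and>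
         set (Dp m p True) \<inter> set (Dp m p False) = {}"
proof -
  have pth: "is_path pentagon m p" and hp: "hd p \<in> glue_minus pentagon m Ta"
    and lp: "last p \<in> glue_plus pentagon m Ta" and dp: "distinct p"
    using p by (auto simp: Gp_def Theta_def)
  have pne: "p \<noteq> []" and pw: "set p \<subseteq> words pentagon m" and sp: "successively (adjG pentagon m) p"
    using pth by (auto simp: is_path_succ)
  obtain Q Q' where d: "dbl m p 0 4 = (Q, Q')" by (cases "dbl m p 0 4") auto
  have ap: "(0, 4) \<in> AP" by (simp add: AP_def)
  have ok: "dok m p 0 4 Q Q'" using dbl_ok[OF ap pne sp d] .
  have gen: "lift p Q0 \<in> Gp (Suc m) \<and> lift p Q0 \<noteq> []"
    if len: "length p = length Q0" and qs: "\<forall>q\<in>set Q0. qok q" and hq: "hd (hd Q0) \<in> {0, 4}"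
      and lq: "last (last Q0) \<in> {1, 2}" and lk: "links pentagon m p Q0" for Q0
  proof -
    have Q0ne: "Q0 \<noteq> []" using len pne by auto
    have qne: "\<forall>q\<in>set Q0. q \<noteq> []" using qs by (auto simp: qok_def)
    have hne: "hd Q0 \<noteq> []" using qne Q0ne by simp
    have ne: "lift p Q0 \<noteq> []" using lift_ne[OF pne Q0ne hne] .
    have w: "set (lift p Q0) \<subseteq> words pentagon (Suc m)"
      using lift_words[OF pw, of Q0] qs by (auto simp: qok_def)
    have sa: "successively (adjG pentagon (Suc m)) (lift p Q0)"
      using lift_path[OF irr_p, of p Q0 m] len pw lk qs by (auto simp: qok_def)
    have h: "hd (lift p Q0) = hd p @ [hd (hd Q0)]" using hd_lift[OF pne Q0ne hne] .
    have l: "last (lift p Q0) = last p @ [last (last Q0)]" using last_lift[OF len pne qne] .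
    have ds: "distinct (lift p Q0)" using lift_distinct[OF dp len] qs by (auto simp: qok_def)
    have g1: "snd ` Glue pentagon Ta = {0, 4}" by (simp add: pentagon_def)
    have g2: "fst ` Glue pentagon Ta = {1, 2}" by (simp add: pentagon_def)
    have "lift p Q0 \<in> Gp (Suc m)"
      unfolding Gp_def Theta_def is_path_succ using ne w sa h l ds hq lq hp lp g1 g2
      by (auto simp: glue_minus_def glue_plus_def)
    then show ?thesis using ne by simp
  qed
  have A: "lift p Q \<in> Gp (Suc m) \<and> lift p Q \<noteq> []"
    by (rule gen) (use ok in \<open>auto simp: dok_def\<close>)
  have B: "lift p Q' \<in> Gp (Suc m) \<and> lift p Q' \<noteq> []"
    by (rule gen) (use ok in \<open>auto simp: dok_def\<close>)
  have C: "set (lift p Q) \<inter> set (lift p Q') = {}"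
    using lift_disj[OF dp] ok by (auto simp: dok_def)
  show ?thesis using A B C d butlast_lift[of p Q] butlast_lift[of p Q'] by (simp add: Dp_def)
qed

lemma families_p: "\<exists>F. F \<subseteq> Gp m \<and> finite F \<and> card F = 2 ^ m \<and>
           (\<forall>p\<in>F. \<forall>q\<in>F. p \<noteq> q \<longrightarrow> set p \<inter> set q = {})"
proof (induction m)
  case 0
  have "[[]] \<in> Gp 0"
    by (simp add: Gp_def Theta_def is_path_def words_def glue_minus_def glue_plus_def)
  then show ?case by (intro exI[of _ "{[[]]}"]) auto
next
  case (Suc m)
  from Suc.IH obtain F where F: "F \<subseteq> Gp m \<and> finite F \<and> card F = 2 ^ m \<and>
     (\<forall>p\<in>F. \<forall>q\<in>F. p \<noteq> q \<longrightarrow> set p \<inter> set q = {})" by (rule exE)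
  have F1: "F \<subseteq> Gp m" and F2: "finite F" and F3: "card F = 2 ^ m"
    and F4: "\<forall>p\<in>F. \<forall>q\<in>F. p \<noteq> q \<longrightarrow> set p \<inter> set q = {}" using F by simp_all
  have "\<exists>F'. F' \<subseteq> Gp (Suc m) \<and> finite F' \<and> card F' = 2 * card F \<and>
           (\<forall>p\<in>F'. \<forall>q\<in>F'. p \<noteq> q \<longrightarrow> set p \<inter> set q = {})"
    apply (rule double_family[OF F2 F4, of "Dp m"])
    subgoal for p b using Dp_props[of p m b] F1 by auto
    subgoal for p using Dp_props[of p m True] F1 by auto
    done
  then show ?case using F3 by simp
qed

theorem many_p: "has_many_disjoint_paths pentagon"
proof (rule many_from_families)
  show "Ta \<in> Typs pentagon" by (simp add: pentagon_def)
  fix m show "\<exists>F. F \<subseteq> Theta pentagon m Ta \<and> finite F \<and> card F = 2 ^ m \<and>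
           (\<forall>p\<in>F. \<forall>q\<in>F. p \<noteq> q \<longrightarrow> set p \<inter> set q = {})"
  proof -
    from families_p[of m] obtain F where F: "F \<subseteq> Gp m \<and> finite F \<and> card F = 2 ^ m \<and>
       (\<forall>p\<in>F. \<forall>q\<in>F. p \<noteq> q \<longrightarrow> set p \<inter> set q = {})" by (rule exE)
    have "F \<subseteq> Theta pentagon m Ta" using F unfolding Gp_def by auto
    then show ?thesis using F by (intro exI[of _ F]) simp
  qed
qed


theorem proposition7p4:
  shows "(\<forall>d L sh R. cubical_IGS d L sh R \<and> d \<ge> 2 \<longrightarrow> has_many_disjoint_paths R) \<and>
         has_many_disjoint_paths pentagon"
proof
  show "\<forall>d L sh R. cubical_IGS d L sh R \<and> d \<ge> 2 \<longrightarrow> has_many_disjoint_paths R"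
  proof (intro allI impI)
    fix d L sh and R :: "(csym, nat) igs"
    assume "cubical_IGS d L sh R \<and> d \<ge> 2"
    then have "cub d L sh R" by (simp add: cub_def)
    then show "has_many_disjoint_paths R" by (rule cub.many)
  qed
  show "has_many_disjoint_paths pentagon" by (rule many_p)
qed

end
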